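(* With $h(x;t)=\dfrac{1-x-xt-\sqrt{(1-x-xt)^2-4x^2t}}{2xt}=\sum_{0\le m<n}N_{n,m+1}x^nt^m$, one has $$f(x;1,v,w)=\frac{x(1-v)\big[(1-x)^2-wx^2\big]-v^2wx(1-x)\,h(x;vw)}{(1-x)\Big((1-v)\big[(1-x)^2-wx^2\big]-vwx\Big)}.$$ In particular $f(x;1,1,w)=h(x;w)$, i.e. the number of $021$-avoiding ascent sequences of length $n$ with exactly $m$ ascents is $N_{n,m+1}$.
   Context: An ascent sequence of length $n$ is a sequence $x_1\cdots x_n$ of non-negative integers with $x_1=0$ and $x_i\le \mathrm{asc}(x_1\cdots x_{i-1})+1$ for $1<i\le n$, where $\mathrm{asc}$ counts ascents (indices $j$ with $x_j<x_{j+1}$). It avoids $021$ if there are no $i<j<k$ with $x_i<x_k<x_j$. Let $f(x;1,v,w)=\sum_{\pi}x^{|\pi|}v^{\max(\pi)}w^{\mathrm{asc}(\pi)}$, summed over all $021$-avoiding ascent sequences $\pi$ of length $|\pi|\ge1$, where $\max(\pi)$ is the largest letter of $\pi$. $N_{n,m}=\frac1n\binom nm\binom n{m-1}$ is the Narayana number. *)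

theory Defs
  imports Complex_Main "HOL-Computational_Algebra.Formal_Power_Series"
begin

definition asc :: "nat list \<Rightarrow> nat" where
  "asc xs = card {j. Suc j < length xs \<and> xs ! j < xs ! Suc j}"

definition ascent_seq :: "nat list \<Rightarrow> bool" where
  "ascent_seq xs \<longleftrightarrow> xs \<noteq> [] \<and> xs ! 0 = 0 \<and>
     (\<forall>i. 0 < i \<and> i < length xs \<longrightarrow> xs ! i \<le> asc (take i xs) + 1)"

definition avoids021 :: "nat list \<Rightarrow> bool" where
  "avoids021 xs \<longleftrightarrow> \<not> (\<exists>i j k. i < j \<and> j < k \<and> k < length xs \<and>
       xs ! i < xs ! k \<and> xs ! k < xs ! j)"

definition AS021 :: "nat \<Rightarrow> nat list set" where
  "AS021 n = {xs. length xs = n \<and> ascent_seq xs \<and> avoids021 xs}"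

(* f(x;1,v,w) as a formal power series in x, for real values of v and w *)
definition fgen :: "real \<Rightarrow> real \<Rightarrow> real fps" where
  "fgen v w = Abs_fps (\<lambda>n. \<Sum>p\<in>AS021 n. v ^ Max (set p) * w ^ asc p)"

(* Narayana number N_{n,m} = (1/n) C(n,m) C(n,m-1), used for m \<ge> 1 *)
definition narayana :: "nat \<Rightarrow> nat \<Rightarrow> real" where
  "narayana n m = real (n choose m) * real (n choose (m - 1)) / real n"

definition hgen :: "real \<Rightarrow> real fps" where
  "hgen t = Abs_fps (\<lambda>n. \<Sum>m<n. narayana n (m + 1) * t ^ m)"

definition numer :: "real \<Rightarrow> real \<Rightarrow> real fps" where
  "numer v w = fps_X * fps_const (1 - v) * ((1 - fps_X)^2 - fps_const w * fps_X^2)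
     - fps_const (v^2 * w) * fps_X * (1 - fps_X) * hgen (v * w)"

definition denom :: "real \<Rightarrow> real \<Rightarrow> real fps" where
  "denom v w = (1 - fps_X) * (fps_const (1 - v) * ((1 - fps_X)^2 - fps_const w * fps_X^2)
     - fps_const (v * w) * fps_X)"

end

theory Submission
  imports Defs "HOL-Computational_Algebra.Polynomial"
begin

unbundle fps_syntax

definition cc :: "nat \<Rightarrow> nat \<Rightarrow> real" where
  "cc k j = (if j < k then narayana k (j+1) else 0)"

lemma cc_alt: assumes k: "k \<ge> 1" shows "cc k j = real (k choose j) * real ((k-1) choose j) / real (j+1)"
proof (cases "j < k")
  case True
  have "real (Suc j * (k choose Suc j)) = real (k * ((k - 1) choose j))"
    using binomial_absorption[of j k] by (simp only:)
  hence e: "real (j+1) * real (k choose (j+1)) = real k * real ((k-1) choose j)"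
    by (simp only: of_nat_mult Suc_eq_plus1)
  have j1: "real (j+1) \<noteq> 0" by simp
  have e2: "real (k choose (j+1)) = real k * real ((k-1) choose j) / real (j+1)"
    using e j1 by (simp add: field_simps)
  have "cc k j = real (k choose (j+1)) * real (k choose j) / real k"
    using True by (simp add: cc_def narayana_def)
  also have "\<dots> = real (k choose j) * real ((k-1) choose j) / real (j+1)"
  proof -
    have "real k \<noteq> 0" using k by simp
    have "real k + real j * real k > 0" using k by (intro add_pos_nonneg) auto
    hence "real k + real j * real k \<noteq> 0" by simp
    thus ?thesis unfolding e2 using j1 \<open>real k \<noteq> 0\<close> by (simp add: field_simps)
  qed
  finally show ?thesis .
next
  case False
  then show ?thesis using k by (simp add: cc_def) arith
qed

lemma absorpE: "p = q+1 \<Longrightarrow> j = k+1 \<Longrightarrow> real j * real (p choose j) = real p * real (q choose k)"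
proof -
  assume p: "p = q+1" and j: "j = k+1"
  have "real (Suc k * (Suc q choose Suc k)) = real (Suc q * (q choose k))"
    using Suc_times_binomial[of k q] by (simp only:)
  hence "real (Suc k) * real (Suc q choose Suc k) = real (Suc q) * real (q choose k)"
    by (simp only: of_nat_mult)
  thus ?thesis using p j by simp
qed

lemma colupE: "j = k+1 \<Longrightarrow> k \<le> p \<Longrightarrow> real j * real (p choose j) = (real p - real k) * real (p choose k)"
proof -
  assume j: "j = k+1" and kp: "k \<le> p"
  have a: "Suc k * (p choose Suc k) = p * ((p - 1) choose k)" by (rule binomial_absorption)
  have b: "(p - k) * (p choose k) = p * ((p - 1) choose k)" by (rule binomial_absorb_comp)
  have "Suc k * (p choose Suc k) = (p - k) * (p choose k)" using a b by simp
  hence "real (Suc k * (p choose Suc k)) = real ((p - k) * (p choose k))" by simp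
  hence "real (Suc k) * real (p choose Suc k) = real (p - k) * real (p choose k)"
    by (simp only: of_nat_mult)
  thus ?thesis using j kp by (simp add: of_nat_diff)
qed

lemma core:
  fixes N M :: nat
  shows "real (N+4) * cc (N+3) (M+2) = real (2*N+5) * (cc (N+2) (M+2) + cc (N+2) (M+1))
     - real (N+1) * (cc (N+1) (M+2) - 2 * cc (N+1) (M+1) + cc (N+1) M)"
proof (cases "M \<le> N")
  case False
  then show ?thesis by (simp add: cc_def)
next
  case True
  define U where "U = real (N+1 choose M)"
  define V where "V = real (N choose M)"
  define A1 where "A1 = real (N+3 choose (M+2))"
  define A2 where "A2 = real (N+2 choose (M+2))"
  define A3 where "A3 = real (N+2 choose (M+1))"
  define A4 where "A4 = real (N+1 choose (M+2))"
  define A5 where "A5 = real (N+1 choose (M+1))"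
  define B4 where "B4 = real (N choose (M+2))"
  define B5 where "B5 = real (N choose (M+1))"
  have e1: "real (M+2) * A1 = real (N+3) * A3" unfolding A1_def A3_def by (rule absorpE) auto
  have e2: "real (M+1) * A3 = real (N+2) * U" unfolding A3_def U_def by (rule absorpE) auto
  have e3: "real (M+2) * A2 = real (N+2) * A5" unfolding A2_def A5_def by (rule absorpE) auto
  have e4: "real (M+1) * A5 = (real (N+1) - real M) * U" unfolding A5_def U_def by (rule colupE) (use True in auto)
  have e5: "real (M+2) * A4 = (real (N+1) - real (M+1)) * A5" unfolding A4_def A5_def by (rule colupE) (use True in auto)
  have e6: "real (M+2) * A4 = real (N+1) * B5" unfolding A4_def B5_def by (rule absorpE) auto
  have e7: "real (M+1) * B5 = (real N - real M) * V" unfolding B5_def V_def by (rule colupE) (use True in auto)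
  have e8: "real (M+1) * A5 = real (N+1) * V" unfolding A5_def V_def by (rule absorpE) auto
  have e9: "real (M+2) * B4 = (real N - real (M+1)) * B5" 
  proof (cases "M+1 \<le> N")
    case True then show ?thesis unfolding B4_def B5_def by (rule colupE[rotated]) auto
  next
    case False then have "M = N" using \<open>M \<le> N\<close> by simp
    then show ?thesis unfolding B4_def B5_def by (simp add: binomial_eq_0)
  qed
  have c1: "cc (N+3) (M+2) = A1 * A2 / real (M+3)"
    unfolding A1_def A2_def by (subst cc_alt) (auto simp: add.commute)
  have c2: "cc (N+2) (M+2) = A2 * A4 / real (M+3)"
    unfolding A2_def A4_def by (subst cc_alt) (auto simp: add.commute)
  have c3: "cc (N+2) (M+1) = A3 * A5 / real (M+2)"
    unfolding A3_def A5_def by (subst cc_alt) (auto simp: add.commute)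
  have c4: "cc (N+1) (M+2) = A4 * B4 / real (M+3)"
    unfolding A4_def B4_def by (subst cc_alt) (auto simp: add.commute)
  have c5: "cc (N+1) (M+1) = A5 * B5 / real (M+2)"
    unfolding A5_def B5_def by (subst cc_alt) (auto simp: add.commute)
  have c6: "cc (N+1) M = U * V / real (M+1)"
    unfolding U_def V_def by (subst cc_alt) (auto simp: add.commute)
  define x where "x = real N"
  define y where "y = real M"
  have y0: "y \<ge> 0" unfolding y_def by simp
  have ry: "real (M+1) = y+1" "real (M+2) = y+2" "real (M+3) = y+3" unfolding y_def by auto
  have rx: "real (N+1) = x+1" "real (N+2) = x+2" "real (N+3) = x+3" "real (N+4) = x+4"
     "real (2*N+5) = 2*x+5" unfolding x_def by auto
  define a where "a = y+1"
  define b where "b = y+2"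
  define e where "e = y+3"
  have nz: "a \<noteq> 0" "b \<noteq> 0" "e \<noteq> 0" unfolding a_def b_def e_def using y0 by auto
  have ry': "real (M+1) = a" "real (M+2) = b" "real (M+3) = e" unfolding a_def b_def e_def ry by auto
  define D where "D = a^2*b^2*e"
  define c where "c = U * V / D"
  define P1 where "P1 = (x+3)*(x+2)^2*(x+1)"
  define P2 where "P2 = (x+2)*(x+1-y)*(x+1)*(x-y)"
  define P3 where "P3 = (x+2)*(x+1)*b*e"
  define P4 where "P4 = (x-y)^2*(x+1-y)*(x-y-1)"
  define P5 where "P5 = (x+1-y)*(x-y)*b*e"
  define P6 where "P6 = a*b^2*e"
  have polyid: "(x+4)*P1 = (2*x+5)*(P2+P3) - (x+1)*(P4 - 2*P5 + P6)"
    unfolding P1_def P2_def P3_def P4_def P5_def P6_def a_def b_def e_def by algebra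
  have e2': "a * A3 = (x+2) * U" using e2 unfolding a_def x_def y_def by (simp add: algebra_simps)
  have e4': "a * A5 = (x+1-y) * U" using e4 unfolding a_def x_def y_def by (simp add: algebra_simps)
  have e8': "a * A5 = (x+1) * V" using e8 unfolding a_def x_def y_def by (simp add: algebra_simps)
  have e7': "a * B5 = (x-y) * V" using e7 unfolding a_def x_def y_def by (simp add: algebra_simps)
  have e1': "b * A1 = (x+3) * A3" using e1 unfolding b_def x_def y_def by (simp add: algebra_simps)
  have e3': "b * A2 = (x+2) * A5" using e3 unfolding b_def x_def y_def by (simp add: algebra_simps)
  have e5': "b * A4 = (x-y) * A5" using e5 unfolding b_def x_def y_def by (simp add: algebra_simps)
  have e6': "b * A4 = (x+1) * B5" using e6 unfolding b_def x_def y_def by (simp add: algebra_simps)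
  have e9': "b * B4 = (x-y-1) * B5" using e9 unfolding b_def x_def y_def by (simp add: algebra_simps)
  have A3v: "A3 = (x+2) * U / a" using e2' nz by (simp add: field_simps)
  have A5v: "A5 = (x+1-y) * U / a" using e4' nz by (simp add: field_simps)
  have A5w: "A5 = (x+1) * V / a" using e8' nz by (simp add: field_simps)
  have B5v: "B5 = (x-y) * V / a" using e7' nz by (simp add: field_simps)
  have A1v: "A1 = (x+3) * A3 / b" using e1' nz by (simp add: field_simps)
  have A2v: "A2 = (x+2) * A5 / b" using e3' nz by (simp add: field_simps)
  have A4v: "A4 = (x-y) * A5 / b" using e5' nz by (simp add: field_simps)
  have A4w: "A4 = (x+1) * B5 / b" using e6' nz by (simp add: field_simps)
  have B4v: "B4 = (x-y-1) * B5 / b" using e9' nz by (simp add: field_simps)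
  have t1: "A1 * A2 / real (M+3) = c * P1"
    unfolding A1v A3v A2v A5w c_def P1_def D_def ry' using nz by (simp add: field_simps power2_eq_square)
  have t2: "A2 * A4 / real (M+3) = c * P2"
    unfolding A2v A5v A4w B5v c_def P2_def D_def ry' using nz by (simp add: field_simps power2_eq_square)
  have t3: "A3 * A5 / real (M+2) = c * P3"
    unfolding A3v A5w c_def P3_def D_def ry' using nz by (simp add: field_simps power2_eq_square)
  have t4: "A4 * B4 / real (M+3) = c * P4"
    unfolding A4v A5v B4v B5v c_def P4_def D_def ry' using nz by (simp add: field_simps power2_eq_square)
  have t5: "A5 * B5 / real (M+2) = c * P5"
    unfolding A5v B5v c_def P5_def D_def ry' using nz by (simp add: field_simps power2_eq_square)
  have t6: "U * V / real (M+1) = c * P6"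
    unfolding  c_def P6_def D_def ry' using nz by (simp add: field_simps power2_eq_square)
  have "c * ((x+4)*P1) = c * ((2*x+5)*(P2+P3) - (x+1)*(P4 - 2*P5 + P6))" using polyid by simp
  hence "(x+4) * (c*P1) = (2*x+5) * (c*P2 + c*P3) - (x+1) * (c*P4 - 2*(c*P5) + c*P6)"
    by (simp add: algebra_simps)
  thus ?thesis unfolding c1 c2 c3 c4 c5 c6 t1 t2 t3 t4 t5 t6 rx .
qed


lemma hgen_nth: "hgen t $ n = (\<Sum>m<n. cc n m * t^m)"
  unfolding hgen_def cc_def by (auto intro!: sum.cong)

definition Pn :: "nat \<Rightarrow> real poly" where
  "Pn k = (\<Sum>m<k. monom (cc k m) m)"

lemma cc_ge: "m \<ge> k \<Longrightarrow> cc k m = 0" by (simp add: cc_def)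

lemma coeff_Pn: "coeff (Pn k) m = cc k m"
proof -
  have "coeff (Pn k) m = (\<Sum>i<k. if m = i then cc k i else 0)"
    unfolding Pn_def coeff_sum coeff_monom by (auto intro!: sum.cong)
  also have "\<dots> = (if m < k then cc k m else 0)" by (simp add: sum.delta)
  also have "\<dots> = cc k m" by (simp add: cc_ge)
  finally show ?thesis .
qed

lemma poly_Pn: "poly (Pn k) t = hgen t $ k"
  unfolding Pn_def hgen_nth by (simp add: poly_sum poly_monom)

lemma cc0: "k \<ge> 1 \<Longrightarrow> cc k 0 = 1"
  by (simp add: cc_alt)

lemma cc1: "k \<ge> 1 \<Longrightarrow> cc k 1 = real k * (real k - 1) / 2"
  by (simp add: cc_alt of_nat_diff)

lemma cc1S: "cc (Suc k) (Suc 0) = real (Suc k) * real k / 2"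
  using cc1[of "Suc k"] by simp

lemma coeff_pCons0: "coeff (pCons 0 p) m = (if m = 0 then 0 else coeff p (m - 1))"
  by (cases m) auto

lemma Pn_rec:
  "smult (real (N+4)) (Pn (N+3)) = smult (real (2*N+5)) (pCons 0 (Pn (N+2)) + Pn (N+2))
     - smult (real (N+1)) (Pn (N+1) - smult 2 (pCons 0 (Pn (N+1))) + pCons 0 (pCons 0 (Pn (N+1))))"
proof (rule poly_eqI)
  fix m
  show "coeff (smult (real (N+4)) (Pn (N+3))) m = coeff (smult (real (2*N+5)) (pCons 0 (Pn (N+2)) + Pn (N+2))
     - smult (real (N+1)) (Pn (N+1) - smult 2 (pCons 0 (Pn (N+1))) + pCons 0 (pCons 0 (Pn (N+1))))) m"
  proof (cases m)
    case 0
    then show ?thesis by (simp add: coeff_Pn cc0)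
  next
    case (Suc m1)
    show ?thesis
    proof (cases m1)
      case 0
      have c3: "cc (N+3) (Suc 0) = real (N+3) * real (N+2) / 2" using cc1S[of "N+2"] by (simp add: numeral_3_eq_3)
      show ?thesis using Suc 0 by (simp add: coeff_Pn cc0 cc1S c3 field_simps)
    next
      case (Suc M)
      have "m = M+2" using \<open>m = Suc m1\<close> Suc by simp
      then show ?thesis using core[of N M] by (simp add: coeff_Pn coeff_pCons0 algebra_simps)
    qed
  qed
qed

lemma h_rec3:
  fixes t :: real
  shows "real (N+4) * hgen t $ (N+3) = real (2*N+5) * (1+t) * hgen t $ (N+2)
     - real (N+1) * (1-t)^2 * hgen t $ (N+1)"
proof -
  have "poly (smult (real (N+4)) (Pn (N+3))) t = poly (smult (real (2*N+5)) (pCons 0 (Pn (N+2)) + Pn (N+2))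
     - smult (real (N+1)) (Pn (N+1) - smult 2 (pCons 0 (Pn (N+1))) + pCons 0 (pCons 0 (Pn (N+1))))) t"
    by (subst Pn_rec) (rule refl)
  thus ?thesis by (simp add: poly_Pn algebra_simps power2_eq_square)
qed


lemma h0: "hgen t $ 0 = 0" by (simp add: hgen_nth)
lemma h1: "hgen t $ 1 = 1" by (simp add: hgen_nth cc0)
lemma h1': "hgen t $ Suc 0 = 1" using h1 by simp

lemma h2: "hgen t $ 2 = 1 + t"
proof -
  have "hgen t $ 2 = cc 2 0 + cc 2 1 * t" by (simp add: hgen_nth numeral_2_eq_2)
  moreover have "cc 2 1 = 1" using cc1[of 2] by simp
  ultimately show ?thesis by (simp add: cc0)
qed

lemma h2': "hgen t $ Suc (Suc 0) = 1 + t" using h2 by (simp add: numeral_2_eq_2)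

lemma hode:
  fixes t :: real
  defines "H \<equiv> hgen t"
  shows "fps_X * fps_deriv H - fps_const 2 * (fps_X^2 * fps_deriv H) - fps_const (2*t) * (fps_X^2 * fps_deriv H)
     + fps_X^3 * fps_deriv H - fps_const (2*t) * (fps_X^3 * fps_deriv H) + fps_const (t^2) * (fps_X^3 * fps_deriv H)
      = fps_const t * (fps_X * H) + fps_X * H - H + fps_const 2 * fps_X"
proof (rule fps_ext)
  fix n :: nat
  consider "n = 0" | "n = 1" | "n = 2" | N where "n = N+3"
  proof -
    assume a: "n = 0 \<Longrightarrow> thesis" "n = 1 \<Longrightarrow> thesis" "n = 2 \<Longrightarrow> thesis" "\<And>N. n = N + 3 \<Longrightarrow> thesis"
    show thesis
    proof (cases "n \<ge> 3")
      case True then show thesis using a(4)[of "n-3"] by simp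
    next
      case False then have "n = 0 \<or> n = 1 \<or> n = 2" by auto
      then show thesis using a by blast
    qed
  qed
  then show "(fps_X * fps_deriv H - fps_const 2 * (fps_X^2 * fps_deriv H) - fps_const (2*t) * (fps_X^2 * fps_deriv H)
     + fps_X^3 * fps_deriv H - fps_const (2*t) * (fps_X^3 * fps_deriv H) + fps_const (t^2) * (fps_X^3 * fps_deriv H)) $ n
      = (fps_const t * (fps_X * H) + fps_X * H - H + fps_const 2 * fps_X) $ n"
  proof cases
    case 1 then show ?thesis by (simp add: H_def h0 fps_X_power_mult_nth)
  next
    case 2 then show ?thesis by (simp add: H_def h0 h1' fps_X_power_mult_nth algebra_simps)
  next
    case 3 then show ?thesis by (simp add: H_def h0 h1' h2' fps_X_power_mult_nth numeral_2_eq_2 del: fps_const_mult) (simp add: algebra_simps h1')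
  next
    case 4
    have n3: "n \<ge> 3" using 4 by simp
    have r: "real (N+4) * hgen t $ (N+3) = real (2*N+5) * (1+t) * hgen t $ (N+2)
       - real (N+1) * (1-t)^2 * hgen t $ (N+1)" by (rule h_rec3)
    have ix: "N+3 = n" "N+2 = n-1" "N+1 = n-2" using 4 by auto
    have rx: "real (N+4) = real n + 1" "real (2*N+5) = 2 * real n - 1" "real (N+1) = real n - 2"
      using 4 by auto
    have r': "(real n + 1) * hgen t $ n = (2 * real n - 1) * (1+t) * hgen t $ (n-1)
       - (real n - 2) * (1-t)^2 * hgen t $ (n-2)" using r[unfolded rx, unfolded ix] .
    have s1: "Suc (n - 2) = n - 1" "Suc (n - 3) = n - 2" "Suc (n - 1) = n" using n3 by auto
    have s2: "real (n - 1) = real n - 1" "real (n - 2) = real n - 2" using n3 by auto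
    have L: "(fps_X * fps_deriv H - fps_const 2 * (fps_X^2 * fps_deriv H) - fps_const (2*t) * (fps_X^2 * fps_deriv H)
     + fps_X^3 * fps_deriv H - fps_const (2*t) * (fps_X^3 * fps_deriv H) + fps_const (t^2) * (fps_X^3 * fps_deriv H)) $ n
      = real n * H $ n - 2 * ((real n - 1) * H $ (n-1)) - 2 * t * ((real n - 1) * H $ (n-1))
        + (real n - 2) * H $ (n-2) - 2 * t * ((real n - 2) * H $ (n-2)) + t^2 * ((real n - 2) * H $ (n-2))"
      using n3 by (simp add: fps_X_power_mult_nth s1 s2 del: fps_const_mult)
    have R: "(fps_const t * (fps_X * H) + fps_X * H - H + fps_const 2 * fps_X) $ n
       = t * H $ (n-1) + H $ (n-1) - H $ n"
      using n3 by simp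
    show ?thesis unfolding L R using r' unfolding H_def
      by (simp add: algebra_simps power2_eq_square)
  qed
qed


lemma Qode:
  fixes t :: real
  defines "H \<equiv> hgen t" and "c \<equiv> fps_const t"
  defines "Q \<equiv> c * fps_X * H^2 + (c * fps_X + fps_X - 1) * H + fps_X"
  shows "fps_X * fps_deriv Q - fps_const 2 * (fps_X^2 * fps_deriv Q) - fps_const (2*t) * (fps_X^2 * fps_deriv Q)
     + fps_X^3 * fps_deriv Q - fps_const (2*t) * (fps_X^3 * fps_deriv Q) + fps_const (t^2) * (fps_X^3 * fps_deriv Q)
      = fps_const (t^2) * (fps_X^2 * Q) - fps_const (2*t) * (fps_X^2 * Q) + fps_X^2 * Q - Q"
proof -
  define D where "D = fps_deriv H"
  have ode: "fps_X * D - fps_const 2 * (fps_X^2 * D) - fps_const (2*t) * (fps_X^2 * D)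
     + fps_X^3 * D - fps_const (2*t) * (fps_X^3 * D) + fps_const (t^2) * (fps_X^3 * D)
      = fps_const t * (fps_X * H) + fps_X * H - H + fps_const 2 * fps_X"
    unfolding D_def H_def by (rule hode)
  have dQ: "fps_deriv Q = c * H^2 + c * fps_X * (2 * H * D) + (c * fps_X + fps_X - 1) * D + (c + 1) * H + 1"
    unfolding Q_def D_def c_def by (simp add: power2_eq_square algebra_simps)
  have k1: "fps_const (2*t) = fps_const 2 * c" unfolding c_def by simp
  have k2: "fps_const (t^2) = c * c" unfolding c_def by (simp add: power2_eq_square)
  have k3: "fps_const (2::real) = 2" by (simp add: fps_numeral_fps_const)
  show ?thesis
    unfolding dQ k1 k2 k3 using ode[unfolded k1 k2 k3] unfolding Q_def c_def[symmetric]
    by algebra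
qed

lemma Qzero:
  fixes t :: real
  defines "H \<equiv> hgen t" and "c \<equiv> fps_const t"
  shows "c * fps_X * H^2 + (c * fps_X + fps_X - 1) * H + fps_X = 0"
proof -
  define Q where "Q = c * fps_X * H^2 + (c * fps_X + fps_X - 1) * H + fps_X"
  have E: "fps_X * fps_deriv Q - fps_const 2 * (fps_X^2 * fps_deriv Q) - fps_const (2*t) * (fps_X^2 * fps_deriv Q)
     + fps_X^3 * fps_deriv Q - fps_const (2*t) * (fps_X^3 * fps_deriv Q) + fps_const (t^2) * (fps_X^3 * fps_deriv Q)
      = fps_const (t^2) * (fps_X^2 * Q) - fps_const (2*t) * (fps_X^2 * Q) + fps_X^2 * Q - Q"
    unfolding Q_def H_def c_def by (rule Qode)
  have "\<forall>m<n. Q $ m = 0" for n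
  proof (induction n)
    case 0 then show ?case by simp
  next
    case (Suc n)
    have qn: "Q $ n = 0"
    proof -
      have IH: "\<And>m. m < n \<Longrightarrow> Q $ m = 0" using Suc.IH by blast
      have En: "(fps_X * fps_deriv Q - fps_const 2 * (fps_X^2 * fps_deriv Q) - fps_const (2*t) * (fps_X^2 * fps_deriv Q)
       + fps_X^3 * fps_deriv Q - fps_const (2*t) * (fps_X^3 * fps_deriv Q) + fps_const (t^2) * (fps_X^3 * fps_deriv Q)) $ n
        = (fps_const (t^2) * (fps_X^2 * Q) - fps_const (2*t) * (fps_X^2 * Q) + fps_X^2 * Q - Q) $ n"
        using E by simp
      consider "n = 0" | "n = 1" | "n \<ge> 2" by arith
      then show ?thesis
      proof cases
        case 1
        have "Q $ 0 = 0" unfolding Q_def H_def by (simp add: h0)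
        then show ?thesis using 1 by simp
      next
        case 2
        have "Q $ 0 = 0" using IH 2 by simp
        then show ?thesis using En 2 by (simp add: fps_X_power_mult_nth)
      next
        case 3
        have a: "Q $ Suc (n - 2) = 0" "Q $ (n-2) = 0" using IH 3 by auto
        have d: "fps_deriv Q $ (n - 3) = 0" if n3: "n \<ge> 3"
        proof -
          have "Suc (n-3) = n-2" using n3 by arith
          thus ?thesis using a by simp
        qed
        have "real n * Q $ n = - Q $ n"
        proof (cases "n = 2")
          case True then show ?thesis using En a by (simp add: fps_X_power_mult_nth) (simp add: numeral_2_eq_2)
        next
          case False then have "n \<ge> 3" using 3 by simp
          then show ?thesis using En a d by (simp add: fps_X_power_mult_nth)
        qed
        hence "(real n + 1) * Q $ n = 0" by (simp add: algebra_simps)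
        moreover have "real n + 1 \<noteq> 0" by (simp add: add_nonneg_pos)
        ultimately show ?thesis by simp
      qed
    qed
    show ?case using Suc.IH qn less_Suc_eq by auto
  qed
  hence "Q $ n = 0" for n by blast
  thus ?thesis unfolding Q_def[symmetric] by (intro fps_ext) simp
qed


lemma asc_snoc:
  assumes "q \<noteq> []"
  shows "asc (q @ [y]) = asc q + (if last q < y then 1 else 0)"
proof -
  let ?S = "{j. Suc j < length q \<and> q ! j < q ! Suc j}"
  let ?T = "{j. Suc j < length (q@[y]) \<and> (q@[y]) ! j < (q@[y]) ! Suc j}"
  have lq: "last q = q ! (length q - 1)" using assms by (simp add: last_conv_nth)
  have T: "?T = ?S \<union> (if last q < y then {length q - 1} else {})"
  proof (rule set_eqI)
    fix j
    show "j \<in> ?T \<longleftrightarrow> j \<in> ?S \<union> (if last q < y then {length q - 1} else {})"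
    proof (cases "Suc j < length q")
      case True
      then show ?thesis by (auto simp: nth_append)
    next
      case False
      show ?thesis
      proof (cases "Suc j = length q")
        case True
        then have "j = length q - 1" by simp
        then show ?thesis using True lq by (auto simp: nth_append)
      next
        case False
        then show ?thesis using \<open>\<not> Suc j < length q\<close> assms by auto
      qed
    qed
  qed
  have fin: "finite ?S" by (rule finite_subset[of _ "{..<length q}"]) auto
  have nin: "length q - 1 \<notin> ?S" using assms by auto
  show ?thesis unfolding asc_def T using fin nin by auto
qed

lemma asc_le: "asc xs \<le> length xs - 1"
proof -
  have "{j. Suc j < length xs \<and> xs ! j < xs ! Suc j} \<subseteq> {..<length xs - 1}" by auto
  hence "asc xs \<le> card {..<length xs - 1}" unfolding asc_def by (rule card_mono[rotated]) auto
  thus ?thesis by simp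
qed

lemma asc_zero: "(\<forall>x\<in>set xs. x = 0) \<Longrightarrow> asc xs = 0"
proof -
  assume a: "\<forall>x\<in>set xs. x = 0"
  have E: "{j. Suc j < length xs \<and> xs ! j < xs ! Suc j} = {}"
  proof (rule ccontr)
    assume "{j. Suc j < length xs \<and> xs ! j < xs ! Suc j} \<noteq> {}"
    then obtain j where "Suc j < length xs" "xs ! j < xs ! Suc j" by auto
    moreover have "xs ! Suc j = 0" using a \<open>Suc j < length xs\<close> by (auto simp: set_conv_nth)
    ultimately show False by simp
  qed
  show ?thesis unfolding asc_def E by simp
qed

lemma take_snoc_le: "i \<le> length q \<Longrightarrow> take i (q @ [y]) = take i q" by simp

lemma ascent_seq_snoc:
  assumes "q \<noteq> []"
  shows "ascent_seq (q @ [y]) \<longleftrightarrow> ascent_seq q \<and> y \<le> asc q + 1"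
proof
  assume a: "ascent_seq (q @ [y])"
  have "q ! 0 = 0" using a assms unfolding ascent_seq_def by (simp add: nth_append)
  moreover have "\<forall>i. 0 < i \<and> i < length q \<longrightarrow> q ! i \<le> asc (take i q) + 1"
  proof (intro allI impI)
    fix i assume i: "0 < i \<and> i < length q"
    hence "(q @ [y]) ! i \<le> asc (take i (q @ [y])) + 1" using a unfolding ascent_seq_def by auto
    thus "q ! i \<le> asc (take i q) + 1" using i by (simp add: nth_append)
  qed
  moreover have "y \<le> asc q + 1"
  proof -
    have "(q @ [y]) ! length q \<le> asc (take (length q) (q @ [y])) + 1"
      using a assms unfolding ascent_seq_def by auto
    thus ?thesis by simp
  qed
  ultimately show "ascent_seq q \<and> y \<le> asc q + 1" using assms unfolding ascent_seq_def by auto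
next
  assume a: "ascent_seq q \<and> y \<le> asc q + 1"
  show "ascent_seq (q @ [y])" unfolding ascent_seq_def
  proof (intro conjI allI impI)
    show "q @ [y] \<noteq> []" by simp
    show "(q @ [y]) ! 0 = 0" using a assms unfolding ascent_seq_def by (simp add: nth_append)
  next
    fix i assume i: "0 < i \<and> i < length (q @ [y])"
    show "(q @ [y]) ! i \<le> asc (take i (q @ [y])) + 1"
    proof (cases "i < length q")
      case True
      then show ?thesis using a i unfolding ascent_seq_def by (simp add: nth_append)
    next
      case False
      then have "i = length q" using i by simp
      then show ?thesis using a by simp
    qed
  qed
qed

lemma avoids_snoc:
  "avoids021 (q @ [y]) \<longleftrightarrow> avoids021 q \<and> \<not> (\<exists>i j. i < j \<and> j < length q \<and> q ! i < y \<and> y < q ! j)"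
proof
  assume a: "avoids021 (q @ [y])"
  have "avoids021 q"
    unfolding avoids021_def
  proof
    assume "\<exists>i j k. i < j \<and> j < k \<and> k < length q \<and> q ! i < q ! k \<and> q ! k < q ! j"
    then obtain i j k where "i < j" "j < k" "k < length q" "q ! i < q ! k" "q ! k < q ! j" by blast
    hence "i < j \<and> j < k \<and> k < length (q@[y]) \<and> (q@[y]) ! i < (q@[y]) ! k \<and> (q@[y]) ! k < (q@[y]) ! j"
      by (simp add: nth_append)
    thus False using a unfolding avoids021_def by blast
  qed
  moreover have "\<not> (\<exists>i j. i < j \<and> j < length q \<and> q ! i < y \<and> y < q ! j)"
  proof
    assume "\<exists>i j. i < j \<and> j < length q \<and> q ! i < y \<and> y < q ! j"
    then obtain i j where "i < j" "j < length q" "q ! i < y" "y < q ! j" by blast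
    hence "i < j \<and> j < length q \<and> length q < length (q@[y]) \<and> (q@[y]) ! i < (q@[y]) ! length q \<and> (q@[y]) ! length q < (q@[y]) ! j"
      by (simp add: nth_append)
    thus False using a unfolding avoids021_def by blast
  qed
  ultimately show "avoids021 q \<and> \<not> (\<exists>i j. i < j \<and> j < length q \<and> q ! i < y \<and> y < q ! j)" by blast
next
  assume a: "avoids021 q \<and> \<not> (\<exists>i j. i < j \<and> j < length q \<and> q ! i < y \<and> y < q ! j)"
  show "avoids021 (q @ [y])" unfolding avoids021_def
  proof
    assume "\<exists>i j k. i < j \<and> j < k \<and> k < length (q@[y]) \<and> (q@[y]) ! i < (q@[y]) ! k \<and> (q@[y]) ! k < (q@[y]) ! j"
    then obtain i j k where ijk: "i < j" "j < k" "k < length (q@[y])" "(q@[y]) ! i < (q@[y]) ! k" "(q@[y]) ! k < (q@[y]) ! j" by blast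
    show False
    proof (cases "k < length q")
      case True
      then have "i < j \<and> j < k \<and> k < length q \<and> q ! i < q ! k \<and> q ! k < q ! j" using ijk by (simp add: nth_append)
      then show False using a unfolding avoids021_def by blast
    next
      case False
      then have "k = length q" using ijk by simp
      then have "i < j \<and> j < length q \<and> q ! i < y \<and> y < q ! j" using ijk by (simp add: nth_append)
      then show False using a by blast
    qed
  qed
qed

definition Mx :: "nat list \<Rightarrow> nat" where "Mx p = Max (set p)"

lemma cond_iff:
  assumes "ascent_seq q"
  shows "\<not> (\<exists>i j. i < j \<and> j < length q \<and> q ! i < y \<and> y < q ! j) \<longleftrightarrow> (y = 0 \<or> Mx q \<le> y)"
proof -
  have q0: "q ! 0 = 0" and qne: "q \<noteq> []" using assms unfolding ascent_seq_def by auto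
  show ?thesis
  proof
    assume a: "\<not> (\<exists>i j. i < j \<and> j < length q \<and> q ! i < y \<and> y < q ! j)"
    show "y = 0 \<or> Mx q \<le> y"
    proof (cases "y = 0")
      case False
      have "\<forall>x\<in>set q. x \<le> y"
      proof
        fix x assume "x \<in> set q"
        then obtain j where j: "j < length q" "q ! j = x" by (auto simp: in_set_conv_nth)
        show "x \<le> y"
        proof (rule ccontr)
          assume "\<not> x \<le> y"
          hence "y < q ! j" using j by simp
          moreover have "j \<noteq> 0" using \<open>y < q ! j\<close> q0 by (metis not_less0)
          ultimately have "0 < j \<and> j < length q \<and> q ! 0 < y \<and> y < q ! j" using j False q0 by auto
          thus False using a by blast
        qed
      qed
      then show ?thesis unfolding Mx_def using qne by simp
    qed simp
  next
    assume "y = 0 \<or> Mx q \<le> y"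
    then show "\<not> (\<exists>i j. i < j \<and> j < length q \<and> q ! i < y \<and> y < q ! j)"
    proof
      assume "y = 0" then show ?thesis by simp
    next
      assume m: "Mx q \<le> y"
      have "\<forall>j<length q. q ! j \<le> y"
      proof (intro allI impI)
        fix j assume "j < length q"
        hence "q ! j \<le> Mx q" unfolding Mx_def by simp
        thus "q ! j \<le> y" using m by simp
      qed
      then show ?thesis by (meson leD)
    qed
  qed
qed

definition valid :: "nat list \<Rightarrow> nat set" where
  "valid q = {y. y = 0 \<or> (Mx q \<le> y \<and> y \<le> asc q + 1)}"

lemma AS021_0: "AS021 0 = {}" by (simp add: AS021_def ascent_seq_def)

lemma AS021_1: "AS021 (Suc 0) = {[0]}"
proof -
  have "xs \<in> AS021 (Suc 0) \<longleftrightarrow> xs = [0]" for xs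
  proof
    assume "xs \<in> AS021 (Suc 0)"
    then have "length xs = 1" "xs ! 0 = 0" by (auto simp: AS021_def ascent_seq_def)
    then show "xs = [0]" by (cases xs) auto
  qed (auto simp: AS021_def ascent_seq_def avoids021_def)
  thus ?thesis by auto
qed

lemma AS021_ne: "p \<in> AS021 n \<Longrightarrow> p \<noteq> [] \<and> length p = n"
  by (auto simp: AS021_def ascent_seq_def)

lemma AS021_Suc:
  assumes "n \<ge> 1"
  shows "AS021 (Suc n) = (\<lambda>(q,y). q @ [y]) ` (SIGMA q:AS021 n. valid q)"
proof (rule set_eqI)
  fix p
  show "p \<in> AS021 (Suc n) \<longleftrightarrow> p \<in> (\<lambda>(q,y). q @ [y]) ` (SIGMA q:AS021 n. valid q)"
  proof
    assume p: "p \<in> AS021 (Suc n)"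
    then have "p \<noteq> []" by (auto simp: AS021_def)
    then obtain q y where pq: "p = q @ [y]" by (metis rev_exhaust)
    have lq: "length q = n" using p pq by (simp add: AS021_def)
    hence qne: "q \<noteq> []" using assms by auto
    have as: "ascent_seq q" "y \<le> asc q + 1" using p pq qne ascent_seq_snoc by (auto simp: AS021_def)
    have av: "avoids021 q" "y = 0 \<or> Mx q \<le> y"
      using p pq avoids_snoc cond_iff[OF as(1)] by (auto simp: AS021_def)
    have "q \<in> AS021 n" using lq as av by (simp add: AS021_def)
    moreover have "y \<in> valid q" using as av by (auto simp: valid_def)
    ultimately show "p \<in> (\<lambda>(q,y). q @ [y]) ` (SIGMA q:AS021 n. valid q)" using pq by auto
  next
    assume "p \<in> (\<lambda>(q,y). q @ [y]) ` (SIGMA q:AS021 n. valid q)"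
    then obtain q y where q: "q \<in> AS021 n" and y: "y \<in> valid q" and pq: "p = q @ [y]" by auto
    have qne: "q \<noteq> []" and as: "ascent_seq q" "avoids021 q" "length q = n"
      using q by (auto simp: AS021_def ascent_seq_def)
    have "y \<le> asc q + 1" "y = 0 \<or> Mx q \<le> y" using y by (auto simp: valid_def)
    then show "p \<in> AS021 (Suc n)"
      using pq qne as ascent_seq_snoc avoids_snoc cond_iff[OF as(1)] by (auto simp: AS021_def)
  qed
qed

lemma finite_valid: "finite (valid q)"
  by (rule finite_subset[of _ "{..asc q + 1}"]) (auto simp: valid_def)

lemma finite_AS021: "finite (AS021 n)"
proof (induction n)
  case 0 then show ?case by (simp add: AS021_0)
next
  case (Suc n)
  show ?case
  proof (cases "n = 0")
    case True then show ?thesis by (simp add: AS021_1)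
  next
    case False
    then show ?thesis using Suc AS021_Suc[of n] finite_valid by simp
  qed
qed

lemma sum_AS021_Suc:
  assumes "n \<ge> 1"
  shows "(\<Sum>p\<in>AS021 (Suc n). g p) = (\<Sum>q\<in>AS021 n. \<Sum>y\<in>valid q. g (q @ [y]))"
proof -
  have inj: "inj_on (\<lambda>(q,y). q @ [y]) (SIGMA q:AS021 n. valid q)"
    by (auto simp: inj_on_def)
  have "(\<Sum>p\<in>AS021 (Suc n). g p) = (\<Sum>x\<in>(SIGMA q:AS021 n. valid q). g (case x of (q,y) \<Rightarrow> q @ [y]))"
    unfolding AS021_Suc[OF assms] by (subst sum.reindex[OF inj]) (simp add: o_def)
  also have "\<dots> = (\<Sum>q\<in>AS021 n. \<Sum>y\<in>valid q. g (q @ [y]))"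
    using sum.Sigma[of "AS021 n" valid "\<lambda>q y. g (q@[y])"] finite_AS021 finite_valid by (simp add: split_def)
  finally show ?thesis .
qed


lemma Mx_snoc: "q \<noteq> [] \<Longrightarrow> Mx (q @ [y]) = max (Mx q) y"
  unfolding Mx_def by (simp add: Max_insert max.commute)

lemma last_le_Mx: "q \<noteq> [] \<Longrightarrow> last q \<le> Mx q"
  unfolding Mx_def by simp

lemma Mx0_all: "q \<noteq> [] \<Longrightarrow> Mx q = 0 \<Longrightarrow> \<forall>x\<in>set q. x = 0"
  unfolding Mx_def by (metis Max_ge List.finite_set le_zero_eq)

lemma inv_AS:
  "p \<in> AS021 n \<Longrightarrow> Mx p \<le> asc p \<and> (last p = 0 \<or> last p = Mx p) \<and> asc p < length p"
proof (induction n arbitrary: p)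
  case 0 then show ?case by (simp add: AS021_0)
next
  case (Suc n)
  show ?case
  proof (cases "n = 0")
    case True
    then have "p = [0]" using Suc.prems AS021_1 by auto
    then show ?thesis by (simp add: Mx_def asc_zero)
  next
    case False
    then have n1: "n \<ge> 1" by simp
    obtain q y where q: "q \<in> AS021 n" and y: "y \<in> valid q" and pq: "p = q @ [y]"
      using Suc.prems AS021_Suc[OF n1] by auto
    have qne: "q \<noteq> []" using q AS021_ne by blast
    have IH: "Mx q \<le> asc q" "last q = 0 \<or> last q = Mx q" using Suc.IH[OF q] by auto
    have lq: "last q \<le> Mx q" using last_le_Mx[OF qne] .
    have len: "asc p < length p" using asc_le[of p] pq by simp
    have y': "y = 0 \<or> (Mx q \<le> y \<and> y \<le> asc q + 1)" using y by (simp add: valid_def)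
    have m: "Mx p = max (Mx q) y" using Mx_snoc[OF qne] pq by simp
    have a: "asc p = asc q + (if last q < y then 1 else 0)" using asc_snoc[OF qne] pq by simp
    have "Mx p \<le> asc p"
    proof (cases "y = 0")
      case True then show ?thesis using m a IH by simp
    next
      case False
      then have yy: "Mx q \<le> y" "y \<le> asc q + 1" using y' by auto
      show ?thesis
      proof (cases "y = asc q + 1")
        case True then show ?thesis using m a IH lq yy by auto
      next
        case False then show ?thesis using m a IH lq yy by auto
      qed
    qed
    moreover have "last p = 0 \<or> last p = Mx p" using pq m y' by auto
    ultimately show ?thesis using len by blast
  qed
qed

definition kind :: "nat list \<Rightarrow> nat" where
  "kind p = (if Mx p = 0 then 0 else if last p = 0 then 2 else 1)"
definition sl :: "nat list \<Rightarrow> nat" where "sl p = asc p - Mx p"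
definition wt :: "real \<Rightarrow> real \<Rightarrow> nat list \<Rightarrow> real" where "wt v w p = v ^ Mx p * w ^ asc p"

lemma sumR:
  fixes M a s' :: nat and c :: real
  assumes "M \<le> a"
  shows "(\<Sum>y\<in>{M<..a+1}. (if a + 1 - y = s' then c * v ^ (y - M) else 0))
       = (if s' \<le> a - M then c * v ^ (a - M + 1 - s') else 0)"
proof (cases "s' \<le> a - M")
  case True
  have "(\<Sum>y\<in>{M<..a+1}. (if a + 1 - y = s' then c * v ^ (y - M) else 0))
     = (\<Sum>y\<in>{M<..a+1}. (if y = a + 1 - s' then c * v ^ (y - M) else 0))"
    by (rule sum.cong) auto
  also have "\<dots> = c * v ^ (a + 1 - s' - M)" using True assms by (simp add: sum.delta)
  also have "a + 1 - s' - M = a - M + 1 - s'" using True assms by arith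
  finally show ?thesis using True by simp
next
  case False
  have "(\<Sum>y\<in>{M<..a+1}. (if a + 1 - y = s' then c * v ^ (y - M) else 0)) = (\<Sum>y\<in>{M<..a+1}. 0)"
    by (rule sum.cong) (use False in auto)
  then show ?thesis using False by simp
qed

lemma contrib:
  fixes G :: "nat \<Rightarrow> nat \<Rightarrow> real"
  assumes q: "q \<in> AS021 n"
  shows "(\<Sum>y\<in>valid q. G (kind (q@[y])) (sl (q@[y])) * wt v w (q@[y])) =
    (if kind q = 0 then G 0 0 * wt v w q + G 1 0 * (v * w) * wt v w q
     else G 2 (sl q) * wt v w q + (if kind q = 1 then G 1 (sl q) * wt v w q else G 1 (sl q + 1) * w * wt v w q)
       + (\<Sum>y\<in>{Mx q<..asc q+1}. G 1 (asc q + 1 - y) * w * v ^ (y - Mx q) * wt v w q))"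
proof -
  have qne: "q \<noteq> []" using q AS021_ne by blast
  have I: "Mx q \<le> asc q" "last q = 0 \<or> last q = Mx q" using inv_AS[OF q] by auto
  have lq: "last q \<le> Mx q" using last_le_Mx[OF qne] .
  let ?M = "Mx q" and ?a = "asc q"
  note ms = Mx_snoc[OF qne] and as = asc_snoc[OF qne]
  show ?thesis
  proof (cases "kind q = 0")
    case True
    then have M0: "?M = 0" by (auto simp: kind_def split: if_splits)
    then have a0: "?a = 0" using asc_zero[OF Mx0_all[OF qne M0]] by simp
    have l0: "last q = 0" using lq M0 by simp
    have V: "valid q = {0, 1}" using M0 a0 by (auto simp: valid_def)
    have "(\<Sum>y\<in>valid q. G (kind (q@[y])) (sl (q@[y])) * wt v w (q@[y]))
       = G 0 0 * wt v w q + G 1 0 * (v * w) * wt v w q"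
      unfolding V using M0 a0 l0 ms as by (simp add: kind_def sl_def wt_def)
    then show ?thesis using True by simp
  next
    case False
    then have Mpos: "?M > 0" by (auto simp: kind_def split: if_splits)
    have V: "valid q = insert 0 (insert ?M {?M<..?a+1})" using I Mpos by (auto simp: valid_def)
    have n0: "0 \<notin> insert ?M {?M<..?a+1}" using Mpos by auto
    have nM: "?M \<notin> {?M<..?a+1}" by auto
    have y0: "G (kind (q@[0])) (sl (q@[0])) * wt v w (q@[0]) = G 2 (sl q) * wt v w q"
      using Mpos ms as by (simp add: kind_def sl_def wt_def)
    have yM: "G (kind (q@[?M])) (sl (q@[?M])) * wt v w (q@[?M]) =
       (if kind q = 1 then G 1 (sl q) * wt v w q else G 1 (sl q + 1) * w * wt v w q)"
    proof (cases "kind q = 1")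
      case True
      then have "last q = ?M" using I Mpos by (auto simp: kind_def split: if_splits)
      then show ?thesis using True Mpos ms as by (simp add: kind_def sl_def wt_def)
    next
      case False
      then have "last q = 0" using Mpos \<open>kind q \<noteq> 0\<close> by (auto simp: kind_def split: if_splits)
      moreover have "?a + 1 - ?M = ?a - ?M + 1" using I by arith
      ultimately show ?thesis using False Mpos ms as by (simp add: kind_def sl_def wt_def algebra_simps)
    qed
    have yR: "G (kind (q@[y])) (sl (q@[y])) * wt v w (q@[y]) = G 1 (?a + 1 - y) * w * v ^ (y - ?M) * wt v w q"
      if yr: "y \<in> {?M<..?a+1}" for y
    proof -
      have yy: "?M < y" "y \<le> ?a + 1" using yr by auto
      have "v ^ y = v ^ ?M * v ^ (y - ?M)" using yy by (simp add: power_add[symmetric])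
      then show ?thesis using yy lq ms as by (simp add: kind_def sl_def wt_def algebra_simps)
    qed
    have "(\<Sum>y\<in>valid q. G (kind (q@[y])) (sl (q@[y])) * wt v w (q@[y]))
       = G 2 (sl q) * wt v w q + (if kind q = 1 then G 1 (sl q) * wt v w q else G 1 (sl q + 1) * w * wt v w q)
         + (\<Sum>y\<in>{?M<..?a+1}. G 1 (?a + 1 - y) * w * v ^ (y - ?M) * wt v w q)"
      unfolding V using n0 nM y0 yM yR by (simp add: add.assoc)
    then show ?thesis using False by simp
  qed
qed


definition RR :: "real \<Rightarrow> real \<Rightarrow> nat \<Rightarrow> nat \<Rightarrow> nat \<Rightarrow> real" where
  "RR v w n k s = (\<Sum>p\<in>AS021 n. if kind p = k \<and> sl p = s then wt v w p else 0)"

lemma sl_lt: "q \<in> AS021 n \<Longrightarrow> sl q < n"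
  using inv_AS[of q n] AS021_ne[of q n] unfolding sl_def by auto

lemma kind0_sl: assumes q: "q \<in> AS021 n" and k: "kind q = 0" shows "sl q = 0"
proof -
  have qne: "q \<noteq> []" using q AS021_ne by blast
  have "Mx q = 0" using k by (auto simp: kind_def split: if_splits)
  then show ?thesis using asc_zero[OF Mx0_all[OF qne]] unfolding sl_def by simp
qed

lemma kind_lt: "kind q < 3" by (simp add: kind_def)

lemma RR_Suc_gen:
  assumes "n \<ge> 1"
  shows "RR v w (Suc n) k s = (\<Sum>q\<in>AS021 n. \<Sum>y\<in>valid q.
      (\<lambda>a b. if a = k \<and> b = s then 1 else 0) (kind (q@[y])) (sl (q@[y])) * wt v w (q@[y]))"
  unfolding RR_def sum_AS021_Suc[OF assms] by (intro sum.cong) auto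

lemma sumj:
  fixes c :: real
  assumes "s \<le> n"
  shows "(\<Sum>j\<le>n. v ^ j * (if s = s' + j then c else 0)) = (if s' \<le> s then v ^ (s - s') * c else 0)"
proof (cases "s' \<le> s")
  case True
  have "(\<Sum>j\<le>n. v ^ j * (if s = s' + j then c else 0)) = (\<Sum>j\<le>n. if j = s - s' then v ^ j * c else 0)"
    by (rule sum.cong) (use True in auto)
  also have "\<dots> = v ^ (s - s') * c" using True assms by (simp add: sum.delta)
  finally show ?thesis using True by simp
next
  case False
  have "(\<Sum>j\<le>n. v ^ j * (if s = s' + j then c else 0)) = (\<Sum>j\<le>n. 0)"
    by (rule sum.cong) (use False in auto)
  then show ?thesis using False by simp
qed

lemma RR0_Suc:
  assumes n: "n \<ge> 1"
  shows "RR v w (Suc n) 0 s' = (if s' = 0 then RR v w n 0 0 else 0)"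
proof -
  have "RR v w (Suc n) 0 s' = (\<Sum>q\<in>AS021 n. if s' = 0 then (if kind q = 0 \<and> sl q = 0 then wt v w q else 0) else 0)"
    unfolding RR_Suc_gen[OF n]
  proof (rule sum.cong[OF refl])
    fix q assume q: "q \<in> AS021 n"
    show "(\<Sum>y\<in>valid q. (\<lambda>a b. if a = 0 \<and> b = s' then 1 else 0) (kind (q@[y])) (sl (q@[y])) * wt v w (q@[y]))
        = (if s' = 0 then (if kind q = 0 \<and> sl q = 0 then wt v w q else 0) else 0)"
      by (simp only: contrib[OF q, of "\<lambda>a b. if a = 0 \<and> b = s' then 1 else 0" v w]) (use kind0_sl[OF q] in auto)
  qed
  also have "\<dots> = (if s' = 0 then RR v w n 0 0 else 0)" unfolding RR_def by simp
  finally show ?thesis .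
qed

lemma RR2_Suc:
  assumes n: "n \<ge> 1"
  shows "RR v w (Suc n) 2 s' = RR v w n 1 s' + RR v w n 2 s'"
proof -
  have "RR v w (Suc n) 2 s' = (\<Sum>q\<in>AS021 n. (if kind q = 1 \<and> sl q = s' then wt v w q else 0) + (if kind q = 2 \<and> sl q = s' then wt v w q else 0))"
    unfolding RR_Suc_gen[OF n]
  proof (rule sum.cong[OF refl])
    fix q assume q: "q \<in> AS021 n"
    show "(\<Sum>y\<in>valid q. (\<lambda>a b. if a = 2 \<and> b = s' then 1 else 0) (kind (q@[y])) (sl (q@[y])) * wt v w (q@[y]))
        = (if kind q = 1 \<and> sl q = s' then wt v w q else 0) + (if kind q = 2 \<and> sl q = s' then wt v w q else 0)"
      by (simp only: contrib[OF q, of "\<lambda>a b. if a = 2 \<and> b = s' then 1 else 0" v w]) (use kind_lt[of q] in \<open>auto simp: less_Suc_eq numeral_3_eq_3\<close>)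
  qed
  also have "\<dots> = RR v w n 1 s' + RR v w n 2 s'" unfolding RR_def by (simp add: sum.distrib)
  finally show ?thesis .
qed

lemma RR1_Suc:
  assumes n: "n \<ge> 1"
  shows "RR v w (Suc n) 1 s' = RR v w n 1 s' + (if s' = 0 then w * v * RR v w n 0 0 else 0)
     + (if s' \<ge> 1 then w * RR v w n 2 (s' - 1) else 0)
     + w * v * (\<Sum>j\<le>n. v ^ j * (RR v w n 1 (s' + j) + RR v w n 2 (s' + j)))"
proof -
  define A where "A q j = (if kind q = 1 \<and> sl q = s' + j then wt v w q else 0) + (if kind q = 2 \<and> sl q = s' + j then wt v w q else 0)" for q j
  have LHS: "RR v w (Suc n) 1 s' = (\<Sum>q\<in>AS021 n. (if kind q = 1 \<and> sl q = s' then wt v w q else 0)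
     + (if s' = 0 then w * v * (if kind q = 0 \<and> sl q = 0 then wt v w q else 0) else 0)
     + (if s' \<ge> 1 then w * (if kind q = 2 \<and> sl q = s' - 1 then wt v w q else 0) else 0)
     + w * v * (\<Sum>j\<le>n. v ^ j * A q j))"
    unfolding RR_Suc_gen[OF n]
  proof (rule sum.cong[OF refl])
    fix q assume q: "q \<in> AS021 n"
    have sn: "sl q \<le> n" using sl_lt[OF q] by simp
    have I: "Mx q \<le> asc q" using inv_AS[OF q] by simp
    define c where "c = w * wt v w q"
    have R: "(\<Sum>y\<in>{Mx q<..asc q+1}. (\<lambda>a b. if a = 1 \<and> b = s' then 1 else 0) 1 (asc q + 1 - y) * w * v ^ (y - Mx q) * wt v w q)
        = (if s' \<le> sl q then c * v ^ (sl q + 1 - s') else 0)"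
    proof -
      have "(\<Sum>y\<in>{Mx q<..asc q+1}. (\<lambda>a b. if a = 1 \<and> b = s' then 1 else 0) 1 (asc q + 1 - y) * w * v ^ (y - Mx q) * wt v w q)
         = (\<Sum>y\<in>{Mx q<..asc q+1}. (if asc q + 1 - y = s' then c * v ^ (y - Mx q) else 0))"
        unfolding c_def by (intro sum.cong) auto
      also have "\<dots> = (if s' \<le> sl q then c * v ^ (sl q + 1 - s') else 0)"
        unfolding sumR[OF I] sl_def ..
      finally show ?thesis .
    qed
    have J1: "(\<Sum>j\<le>n. v ^ j * A q j) = (if kind q \<noteq> 0 \<and> s' \<le> sl q then v ^ (sl q - s') * wt v w q else 0)"
    proof -
      have "(\<Sum>j\<le>n. v ^ j * A q j) = (\<Sum>j\<le>n. v ^ j * (if sl q = s' + j then (if kind q \<noteq> 0 then wt v w q else 0) else 0))"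
        unfolding A_def using kind_lt[of q] by (intro sum.cong) (auto simp: less_Suc_eq numeral_3_eq_3)
      also have "\<dots> = (if kind q \<noteq> 0 \<and> s' \<le> sl q then v ^ (sl q - s') * wt v w q else 0)"
        unfolding sumj[OF sn] by auto
      finally show ?thesis .
    qed
    have pw: "v * v ^ (sl q - s') = v ^ (sl q + 1 - s')" if h: "s' \<le> sl q"
    proof -
      have "sl q + 1 - s' = Suc (sl q - s')" using h by arith
      thus ?thesis by simp
    qed
    show "(\<Sum>y\<in>valid q. (\<lambda>a b. if a = 1 \<and> b = s' then 1 else 0) (kind (q@[y])) (sl (q@[y])) * wt v w (q@[y]))
      = (if kind q = 1 \<and> sl q = s' then wt v w q else 0)
       + (if s' = 0 then w * v * (if kind q = 0 \<and> sl q = 0 then wt v w q else 0) else 0)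
       + (if s' \<ge> 1 then w * (if kind q = 2 \<and> sl q = s' - 1 then wt v w q else 0) else 0)
       + w * v * (\<Sum>j\<le>n. v ^ j * A q j)"
      apply (simp only: contrib[OF q, of "\<lambda>a b. if a = 1 \<and> b = s' then 1 else 0" v w] R J1)
      using kind0_sl[OF q] kind_lt[of q] pw
      by (auto simp: c_def less_Suc_eq numeral_3_eq_3 algebra_simps)
  qed
  have RHS: "(\<Sum>j\<le>n. v ^ j * (RR v w n 1 (s' + j) + RR v w n 2 (s' + j))) = (\<Sum>q\<in>AS021 n. \<Sum>j\<le>n. v ^ j * A q j)"
    unfolding RR_def A_def by (simp add: sum.distrib[symmetric] sum_distrib_left sum.swap[of _ "{..n}"])
  show ?thesis unfolding LHS RHS unfolding RR_def
    by (simp add: sum.distrib sum_distrib_left)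
qed

lemma total:
  assumes n: "n \<ge> 1"
  shows "(\<Sum>p\<in>AS021 n. wt v w p) = RR v w n 0 0 + (\<Sum>s\<le>n. RR v w n 1 s + RR v w n 2 s)"
proof -
  have "(\<Sum>p\<in>AS021 n. wt v w p) = (\<Sum>p\<in>AS021 n. (if kind p = 0 \<and> sl p = 0 then wt v w p else 0)
      + (\<Sum>s\<le>n. (if kind p = 1 \<and> sl p = s then wt v w p else 0) + (if kind p = 2 \<and> sl p = s then wt v w p else 0)))"
  proof (rule sum.cong[OF refl])
    fix p assume p: "p \<in> AS021 n"
    have sn: "sl p \<le> n" using sl_lt[OF p] by simp
    have "(\<Sum>s\<le>n. (if kind p = 1 \<and> sl p = s then wt v w p else 0) + (if kind p = 2 \<and> sl p = s then wt v w p else 0))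
       = (\<Sum>s\<le>n. if s = sl p then (if kind p \<noteq> 0 then wt v w p else 0) else 0)"
      using kind_lt[of p] by (intro sum.cong) (auto simp: less_Suc_eq numeral_3_eq_3)
    also have "\<dots> = (if kind p \<noteq> 0 then wt v w p else 0)" using sn by (simp add: sum.delta)
    finally show "wt v w p = (if kind p = 0 \<and> sl p = 0 then wt v w p else 0)
      + (\<Sum>s\<le>n. (if kind p = 1 \<and> sl p = s then wt v w p else 0) + (if kind p = 2 \<and> sl p = s then wt v w p else 0))"
      using kind0_sl[OF p] by auto
  qed
  also have "\<dots> = RR v w n 0 0 + (\<Sum>s\<le>n. RR v w n 1 s + RR v w n 2 s)"
    unfolding RR_def by (simp add: sum.distrib sum.swap[of _ "{..n}"])
  finally show ?thesis .
qed


lemma geo_tel: "(1 - r) * (\<Sum>j<m. r ^ j) = 1 - (r :: 'a :: comm_ring_1) ^ m"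
proof (induction m)
  case 0 show ?case by simp
next
  case (Suc m)
  have "(1 - r) * (\<Sum>j<Suc m. r ^ j) = (1 - r) * (\<Sum>j<m. r ^ j) + (1 - r) * r ^ m"
    by (simp add: distrib_left)
  also have "\<dots> = 1 - r ^ Suc m" unfolding Suc.IH by (simp add: algebra_simps)
  finally show ?case .
qed

lemma X_shift: fixes r :: "real fps" assumes "r $ 0 = 0" shows "r = fps_X * fps_shift 1 r"
proof (intro fps_ext)
  fix n show "r $ n = (fps_X * fps_shift 1 r) $ n" using assms by (cases n) simp_all
qed

lemma trunc:
  fixes r G :: "real fps"
  assumes r0: "r $ 0 = 0"
  shows "(G * inverse (1 - r)) $ n = (\<Sum>j\<le>n. (G * r ^ j) $ n)"
proof -
  define K where "K = inverse (1 - r)"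
  have K1: "K * (1 - r) = 1" unfolding K_def by (rule inverse_mult_eq_1) (simp add: r0)
  have "K = K * ((1 - r) * (\<Sum>j<Suc n. r ^ j) + r ^ Suc n)" by (subst geo_tel) simp
  also have "\<dots> = (K * (1 - r)) * (\<Sum>j<Suc n. r ^ j) + r ^ Suc n * K"
    by (simp add: algebra_simps)
  also have "\<dots> = (\<Sum>j<Suc n. r ^ j) + r ^ Suc n * K"
    unfolding K1 by simp
  finally have KK: "K = (\<Sum>j\<le>n. r ^ j) + r ^ Suc n * K" by (simp add: lessThan_Suc_atMost)
  have rs: "r ^ Suc n = fps_X ^ Suc n * (fps_shift 1 r) ^ Suc n"
    using X_shift[OF r0] by (metis power_mult_distrib)
  have z: "(G * (r ^ Suc n * K)) $ n = 0"
  proof -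
    have eq: "G * (r ^ Suc n * K) = fps_X ^ Suc n * (G * (fps_shift 1 r) ^ Suc n * K)"
      unfolding rs by (simp add: algebra_simps)
    show ?thesis unfolding eq by (simp only: fps_X_power_mult_nth) simp
  qed
  have "(G * K) $ n = (G * (\<Sum>j\<le>n. r ^ j)) $ n + (G * (r ^ Suc n * K)) $ n"
    by (subst KK) (simp add: algebra_simps)
  also have "\<dots> = (\<Sum>j\<le>n. (G * r ^ j) $ n)" using z by (simp add: sum_distrib_left fps_sum_nth)
  finally show ?thesis unfolding K_def .
qed

definition Bi :: "real fps" where "Bi = Abs_fps (\<lambda>_. 1)"
definition Yf :: "real fps" where "Yf = fps_X * Bi"

lemma Bi1: "Bi * (1 - fps_X) = 1"
proof -
  have "inverse (1 - fps_X) = Bi" unfolding Bi_def by (rule fps_inverse_one_minus_fps_X)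
  moreover have "inverse (1 - fps_X) * (1 - fps_X) = (1::real fps)" by (rule inverse_mult_eq_1) simp
  ultimately show ?thesis by simp
qed

lemma Yf_nth: "Yf $ n = (if n = 0 then 0 else 1)" unfolding Yf_def Bi_def by (simp add: fps_X_mult_nth)

lemma Yf_rec: "Yf = fps_X * (1 + Yf)"
proof -
  have "Bi = 1 + fps_X * Bi" unfolding Bi_def by (intro fps_ext) (simp add: fps_X_mult_nth)
  thus ?thesis unfolding Yf_def by (metis distrib_left mult.right_neutral)
qed

context
  fixes v w :: real
begin

definition "cc0 = fps_const (v*w)"
definition "HH = hgen (v*w)"
definition "qq = fps_const w * Yf * HH"
definition "II = inverse (1 - fps_const v * qq)"
definition "Tf s = cc0 * Yf * HH * qq ^ s"

lemma quad: "cc0 * fps_X * HH^2 + (cc0 * fps_X + fps_X - 1) * HH + fps_X = 0"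
  unfolding cc0_def HH_def by (rule Qzero)

lemma HH0: "HH $ 0 = 0" unfolding HH_def by (rule h0)

lemma II1: "II * (1 - cc0 * Yf * HH) = 1"
proof -
  have "fps_const v * qq = cc0 * Yf * HH" unfolding qq_def cc0_def by (simp add: algebra_simps)
  moreover have "II * (1 - fps_const v * qq) = 1" unfolding II_def
    by (rule inverse_mult_eq_1) (simp add: qq_def Yf_def)
  ultimately show ?thesis by simp
qed

lemma KI: "HH = fps_X * (HH + 1 + cc0 * (1 + Yf) * HH * II)"
  using quad Bi1 II1 unfolding Yf_def by algebra

lemma F1: "Tf s' = fps_X * (Tf s' + (if s' = 0 then fps_const (w*v) * Yf else fps_const w * Yf * Tf (s'-1))
    + fps_const w * fps_const v * (1 + Yf) * Tf s' * II)"
proof (cases s')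
  case 0
  have c: "fps_const (w*v) = cc0" "fps_const w * fps_const v = cc0" unfolding cc0_def by (simp_all add: mult.commute)
  show ?thesis unfolding 0 c Tf_def using KI by (simp, algebra)
next
  case (Suc s)
  have c: "fps_const w * fps_const v = cc0" unfolding cc0_def by (simp add: mult.commute)
  have T: "Tf s' = Tf s * qq" unfolding Tf_def Suc by simp
  show ?thesis unfolding T c using KI unfolding qq_def Suc by (simp, algebra)
qed

lemma Tf_order: "Tf s = fps_X^2 * (cc0 * Bi * fps_shift 1 HH * qq ^ s)"
proof -
  have "HH = fps_X * fps_shift 1 HH" using X_shift[OF HH0] .
  hence "Tf s = cc0 * (fps_X * Bi) * (fps_X * fps_shift 1 HH) * qq ^ s" unfolding Tf_def Yf_def by simp
  thus ?thesis by (simp add: algebra_simps power2_eq_square)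
qed

lemma Tf_low: "n < 2 \<Longrightarrow> Tf s $ n = 0" "n < 2 \<Longrightarrow> (Yf * Tf s) $ n = 0"
proof -
  assume "n < 2"
  then show "Tf s $ n = 0" unfolding Tf_order by (simp add: fps_X_power_mult_nth)
  have eqY: "Yf * Tf s = fps_X^2 * (Yf * (cc0 * Bi * fps_shift 1 HH * qq ^ s))" unfolding Tf_order by (simp add: algebra_simps)
  show "(Yf * Tf s) $ n = 0" unfolding eqY using \<open>n < 2\<close> by (simp add: fps_X_power_mult_nth)
qed

lemma main_ind:
  assumes "n \<ge> 1"
  shows "\<forall>s. RR v w n 0 s = (if s = 0 then Yf $ n else 0) \<and> RR v w n 1 s = Tf s $ n \<and> RR v w n 2 s = (Yf * Tf s) $ n"
  using assms
proof (induction n rule: dec_induct)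
  case base
  have A: "AS021 1 = {[0]}" using AS021_1 by simp
  have k: "kind [0] = 0" "sl [0] = 0" "wt v w [0] = 1"
    by (simp_all add: kind_def sl_def wt_def Mx_def asc_zero)
  show ?case unfolding RR_def A using k Tf_low by (simp add: Yf_nth)
next
  case (step n)
  have n1: "n \<ge> 1" using step.hyps by simp
  have IH0: "\<And>s. RR v w n 0 s = (if s = 0 then Yf $ n else 0)" using step.IH by blast
  have IH1: "\<And>s. RR v w n 1 s = Tf s $ n" using step.IH by blast
  have IH2: "\<And>s. RR v w n 2 s = (Yf * Tf s) $ n" using step.IH by blast
  have Yrec: "\<And>G. (Yf * G) $ Suc n = G $ n + (Yf * G) $ n"
  proof -
    fix G :: "real fps"
    have "Yf * G = fps_X * (G + Yf * G)" by (subst Yf_rec) (simp add: algebra_simps)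
    hence "(Yf * G) $ Suc n = (G + Yf * G) $ n" by (metis fps_X_mult_nth nat.distinct(1) diff_Suc_1)
    thus "(Yf * G) $ Suc n = G $ n + (Yf * G) $ n" by simp
  qed
  have Y2: "Yf $ Suc n = Yf $ n" using n1 by (simp add: Yf_nth)
  have vq0: "(fps_const v * qq) $ 0 = 0" by (simp add: qq_def Yf_def)
  have P1: "RR v w (Suc n) 1 s' = Tf s' $ Suc n" for s'
  proof -
    have "Tf s' $ Suc n = (Tf s' + (if s' = 0 then fps_const (w*v) * Yf else fps_const w * Yf * Tf (s'-1))
      + fps_const w * fps_const v * (1 + Yf) * Tf s' * II) $ n"
      by (subst F1) (simp add: fps_X_mult_nth)
    also have "\<dots> = Tf s' $ n + (if s' = 0 then w * v * Yf $ n else w * (Yf * Tf (s'-1)) $ n)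
      + w * v * ((1 + Yf) * Tf s' * II) $ n"
      by (simp add: mult.assoc)
    also have "((1 + Yf) * Tf s' * II) $ n = (\<Sum>j\<le>n. v ^ j * (Tf (s' + j) $ n + (Yf * Tf (s' + j)) $ n))"
    proof -
      have "((1 + Yf) * Tf s' * II) $ n = (\<Sum>j\<le>n. ((1 + Yf) * Tf s' * (fps_const v * qq) ^ j) $ n)"
        unfolding II_def by (rule trunc[OF vq0])
      also have "\<dots> = (\<Sum>j\<le>n. v ^ j * (Tf (s' + j) $ n + (Yf * Tf (s' + j)) $ n))"
      proof (rule sum.cong[OF refl])
        fix j
        have "(1 + Yf) * Tf s' * (fps_const v * qq) ^ j = fps_const (v ^ j) * (Tf (s' + j) + Yf * Tf (s' + j))"
          unfolding Tf_def by (simp add: power_mult_distrib power_add algebra_simps)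
        thus "((1 + Yf) * Tf s' * (fps_const v * qq) ^ j) $ n = v ^ j * (Tf (s' + j) $ n + (Yf * Tf (s' + j)) $ n)"
          by simp
      qed
      finally show ?thesis .
    qed
    finally have E: "Tf s' $ Suc n = Tf s' $ n + (if s' = 0 then w * v * Yf $ n else w * (Yf * Tf (s'-1)) $ n)
      + w * v * (\<Sum>j\<le>n. v ^ j * (Tf (s' + j) $ n + (Yf * Tf (s' + j)) $ n))" .
    show ?thesis unfolding RR1_Suc[OF n1] E IH0 IH1 IH2 by simp
  qed
  show ?case
  proof (intro allI conjI)
    fix s
    show "RR v w (Suc n) 0 s = (if s = 0 then Yf $ Suc n else 0)" unfolding RR0_Suc[OF n1] IH0 Y2 by simp
    show "RR v w (Suc n) 1 s = Tf s $ Suc n" by (rule P1)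
    show "RR v w (Suc n) 2 s = (Yf * Tf s) $ Suc n" unfolding RR2_Suc[OF n1] IH1 IH2 Yrec by simp
  qed
qed

lemma fgen_closed: "fgen v w = Yf + (1 + Yf) * Tf 0 * inverse (1 - qq)"
proof (rule fps_ext)
  fix n
  show "fgen v w $ n = (Yf + (1 + Yf) * Tf 0 * inverse (1 - qq)) $ n"
  proof (cases "n = 0")
    case True
    then show ?thesis by (simp add: fgen_def AS021_0 Yf_def Tf_def)
  next
    case False
    then have n1: "n \<ge> 1" by simp
    have q0: "qq $ 0 = 0" by (simp add: qq_def Yf_def)
    have "fgen v w $ n = (\<Sum>p\<in>AS021 n. wt v w p)" by (simp add: fgen_def wt_def Mx_def)
    also have "\<dots> = RR v w n 0 0 + (\<Sum>s\<le>n. RR v w n 1 s + RR v w n 2 s)" by (rule total[OF n1])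
    also have "\<dots> = Yf $ n + (\<Sum>s\<le>n. ((1 + Yf) * Tf 0 * qq ^ s) $ n)"
      using main_ind[OF n1] by (simp add: Tf_def algebra_simps)
    also have "\<dots> = (Yf + (1 + Yf) * Tf 0 * inverse (1 - qq)) $ n"
      using trunc[OF q0, of "(1 + Yf) * Tf 0" n] by simp
    finally show ?thesis .
  qed
qed

end


lemma part1_mult: "fgen v w * denom v w = numer v w"
proof -
  define V where "V = fps_const v"
  define W where "W = fps_const w"
  define J where "J = inverse (1 - qq v w)"
  have J1: "J * (1 - W * Yf * HH v w) = 1" unfolding J_def W_def qq_def
    by (rule inverse_mult_eq_1) (simp add: Yf_def)
  have f: "fgen v w = Yf + (1 + Yf) * (V * W * Yf * HH v w) * J"
    unfolding fgen_closed J_def Tf_def V_def W_def cc0_def by simp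
  have Q: "V * W * fps_X * (HH v w)^2 + (V * W * fps_X + fps_X - 1) * HH v w + fps_X = 0"
    using quad[of v w] unfolding cc0_def V_def W_def by simp
  have n: "numer v w = fps_X * (1 - V) * ((1 - fps_X)^2 - W * fps_X^2) - V^2 * W * fps_X * (1 - fps_X) * HH v w"
    unfolding numer_def V_def W_def HH_def by (simp add: fps_const_power fps_const_sub[symmetric] algebra_simps)
  have d: "denom v w = (1 - fps_X) * ((1 - V) * ((1 - fps_X)^2 - W * fps_X^2) - V * W * fps_X)"
    unfolding denom_def V_def W_def by (simp add: fps_const_sub[symmetric] algebra_simps)
  show ?thesis unfolding f n d using J1 Bi1 Q unfolding Yf_def by algebra
qed

lemma part1: "denom v w \<noteq> 0 \<Longrightarrow> fgen v w = numer v w / denom v w"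
  using fps_divide_times_eq[of "denom v w" "fgen v w"] part1_mult[of v w] by simp

lemma part2: "fgen 1 w = hgen w"
proof -
  define W where "W = fps_const w"
  define J where "J = inverse (1 - qq 1 w)"
  have J1: "J * (1 - W * Yf * HH 1 w) = 1" unfolding J_def W_def qq_def
    by (rule inverse_mult_eq_1) (simp add: Yf_def)
  have f: "fgen 1 w = Yf + (1 + Yf) * (W * Yf * HH 1 w) * J"
    unfolding fgen_closed J_def Tf_def W_def cc0_def by simp
  have Q: "W * fps_X * (HH 1 w)^2 + (W * fps_X + fps_X - 1) * HH 1 w + fps_X = 0"
    using quad[of 1 w] unfolding cc0_def W_def by simp
  have h: "hgen w = HH 1 w" unfolding HH_def by simp
  show ?thesis unfolding f h using J1 Bi1 Q unfolding Yf_def by algebra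
qed

lemma part3:
  assumes n: "n \<ge> 1"
  shows "real (card {p \<in> AS021 n. asc p = m}) = narayana n (m + 1)"
proof -
  define P1 where "P1 = (\<Sum>k<n. monom (real (card {p \<in> AS021 n. asc p = k})) k)"
  define P2 where "P2 = (\<Sum>k<n. monom (narayana n (k + 1)) k)"
  have ev: "poly P1 x = poly P2 x" for x
  proof -
    have "poly P1 x = (\<Sum>k<n. real (card {p \<in> AS021 n. asc p = k}) * x ^ k)"
      unfolding P1_def by (simp add: poly_sum poly_monom)
    also have "\<dots> = (\<Sum>k<n. \<Sum>p\<in>{p \<in> AS021 n. asc p = k}. x ^ asc p)"
      by (intro sum.cong) auto
    also have "\<dots> = (\<Sum>p\<in>AS021 n. x ^ asc p)"
    proof (rule sum.group)
      show "finite (AS021 n)" by (rule finite_AS021)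
      show "finite {..<n}" by simp
      show "asc ` AS021 n \<subseteq> {..<n}" using inv_AS AS021_ne by fastforce
    qed
    also have "\<dots> = fgen 1 x $ n" by (simp add: fgen_def)
    also have "\<dots> = hgen x $ n" by (simp add: part2)
    also have "\<dots> = poly P2 x" unfolding P2_def hgen_def by (simp add: poly_sum poly_monom)
    finally show ?thesis .
  qed
  hence "P1 = P2" using poly_eq_poly_eq_iff by blast
  hence "coeff P1 m = coeff P2 m" by simp
  moreover have "coeff P1 m = (if m < n then real (card {p \<in> AS021 n. asc p = m}) else 0)"
    unfolding P1_def coeff_sum coeff_monom by (simp add: sum.delta')
  moreover have "coeff P2 m = (if m < n then narayana n (m + 1) else 0)"
    unfolding P2_def coeff_sum coeff_monom by (simp add: sum.delta')
  moreover have "m \<ge> n \<Longrightarrow> card {p \<in> AS021 n. asc p = m} = 0"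
  proof -
    assume "m \<ge> n"
    hence E: "{p \<in> AS021 n. asc p = m} = {}" using inv_AS AS021_ne by fastforce
    show ?thesis unfolding E by simp
  qed
  moreover have "m \<ge> n \<Longrightarrow> narayana n (m + 1) = 0" by (simp add: narayana_def)
  ultimately show ?thesis by (cases "m < n") auto
qed

theorem theorem2:
  shows "(\<forall>v w :: real. denom v w \<noteq> 0 \<longrightarrow> fgen v w = numer v w / denom v w)
    \<and> (\<forall>w :: real. fgen 1 w = hgen w)
    \<and> (\<forall>n m. n \<ge> 1 \<longrightarrow>
         real (card {p \<in> AS021 n. asc p = m}) = narayana n (m + 1))"
  using part1 part2 part3 by blast


end
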